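(* Let $\theta>0$, $u\in[0,1)$, $\alpha>0$, and let $\rho(\theta,u)=\sigma(\theta,u)^{1/\alpha}$. Then for every transmitter $\mathsf x\in\mathcal X$, $C_{\mathsf x}\subseteq Q_{\mathsf x}(\rho(\theta,u))$, and consequently $\mathcal C\subseteq\mathcal Q:=\bigcup_{\mathsf x\in\mathcal X}Q_{\mathsf x}(\rho(\theta,u))$.
   Context: Network model: $\mathcal X\subset\mathbb{R}^2$ is a locally finite set of transmitter locations with at least two points; all transmitters use unit power, $\alpha>0$ is the path loss exponent. To each transmitter is attached an independent fading variable; the serving link's fading $h_1\sim\mathrm{Gamma}(\text{shape }p,\text{rate }p)$ and each interferer's fading $\sim\mathrm{Gamma}(\text{shape }q,\text{rate }q)$ (Nakagami-$(p,q)$ fading, $p,q>0$). For a location $\mathsf y$ served by $\mathsf x\in\mathcal X$ (a nearest point of $\mathcal X$ to $\mathsf y$), $\mathsf{SIR}_{\mathsf y}=\frac{h_{\mathsf x}\|\mathsf x-\mathsf y\|^{-\alpha}}{\sum_{\mathsf x'\in\mathcal X\setminus\{\mathsf x\}}h_{\mathsf x'}\|\mathsf x'-\mathsf y\|^{-\alpha}}$. $H=h_1/h_2$ (serving over interfering fading) has cdf $F_H(x)=B_{p,q}(px/(px+q))$ with $B_{p,q}$ the Beta$(p,q)$ cdf, and $F_H^{-1}$ is its quantile function. Stringency: $\sigma(\theta,u)=\theta/F_H^{-1}(1-u)$. Coverage: $\mathsf y$ is covered if $\mathbb P(\mathsf{SIR}_{\mathsf y}>\theta)>u$; $C_{\mathsf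 x}$ is the set of covered locations $\mathsf y$ served by $\mathsf x$, and the coverage manifold is $\mathcal C=\bigcup_{\mathsf x}C_{\mathsf x}$. Q cell: $Q_{\mathsf x}(\rho)=\{\mathsf y\in\mathbb{R}^2:\ \min_{\mathsf x'\in\mathcal X\setminus\{\mathsf x\}}\|\mathsf x'-\mathsf y\|>\rho\|\mathsf x-\mathsf y\|\}$. *)

theory Defs
  imports "HOL-Probability.Probability"
begin

type_synonym point = "real ^ 2"

definition locally_finite_set :: "point set \<Rightarrow> bool" where
  "locally_finite_set X \<longleftrightarrow> (\<forall>r::real. finite (X \<inter> cball 0 r))"

text \<open>Gamma(shape k, rate k) density and distribution (unit mean, Nakagami fading power).\<close>
definition gamma_density :: "real \<Rightarrow> real \<Rightarrow> real" where
  "gamma_density k t = (if t > 0 then k powr k * t powr (k - 1) * exp (- k * t) / Gamma k else 0)"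

definition gamma_measure :: "real \<Rightarrow> real measure" where
  "gamma_measure k = density lborel (\<lambda>t. ennreal (gamma_density k t))"

definition fading_measure :: "real \<Rightarrow> real \<Rightarrow> point set \<Rightarrow> point \<Rightarrow> (point \<Rightarrow> real) measure" where
  "fading_measure p q X x = (\<Pi>\<^sub>M z\<in>X. (if z = x then gamma_measure p else gamma_measure q))"

definition path_gain :: "real \<Rightarrow> real \<Rightarrow> ennreal" where
  "path_gain \<alpha> d = (if d = 0 then \<top> else ennreal (d powr (- \<alpha>)))"

definition SIR :: "real \<Rightarrow> point set \<Rightarrow> point \<Rightarrow> point \<Rightarrow> (point \<Rightarrow> real) \<Rightarrow> ennreal" where
  "SIR \<alpha> X x y h =
     (ennreal (h x) * path_gain \<alpha> (dist x y)) /
     (\<Sum>\<^sub>\<infinity> x'\<in>X - {x}. ennreal (h x') * path_gain \<alpha> (dist x' y))"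

definition serves :: "point set \<Rightarrow> point \<Rightarrow> point \<Rightarrow> bool" where
  "serves X x y \<longleftrightarrow> x \<in> X \<and> (\<forall>x'\<in>X. dist x y \<le> dist x' y)"

definition coverage_prob :: "real \<Rightarrow> real \<Rightarrow> real \<Rightarrow> point set \<Rightarrow> real \<Rightarrow> point \<Rightarrow> point \<Rightarrow> real" where
  "coverage_prob p q \<alpha> X \<theta> x y =
     measure (fading_measure p q X x)
       {h \<in> space (fading_measure p q X x). SIR \<alpha> X x y h > ennreal \<theta>}"

definition covered_cell ("C") where
  "C p q \<alpha> X \<theta> u x = {y. serves X x y \<and> coverage_prob p q \<alpha> X \<theta> x y > u}"

definition coverage_manifold where
  "coverage_manifold p q \<alpha> X \<theta> u = (\<Union>x\<in>X. C p q \<alpha> X \<theta> u x)"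

definition beta_cdf :: "real \<Rightarrow> real \<Rightarrow> real \<Rightarrow> real" where
  "beta_cdf p q t =
     (if t \<le> 0 then 0 else if t \<ge> 1 then 1
      else (LBINT s=0..t. s powr (p - 1) * (1 - s) powr (q - 1)) / Beta p q)"

text \<open>cdf of H = h1/h2 (H is positive, so F_H = 0 on nonpositive reals).\<close>
definition F_H :: "real \<Rightarrow> real \<Rightarrow> real \<Rightarrow> real" where
  "F_H p q x = (if x \<le> 0 then 0 else beta_cdf p q (p * x / (p * x + q)))"

definition F_H_inv :: "real \<Rightarrow> real \<Rightarrow> real \<Rightarrow> ereal" where
  "F_H_inv p q v = Inf {ereal x | x. F_H p q x \<ge> v}"

text \<open>Stringency sigma = theta / F_H^{-1}(1-u) (equal to 0 when the quantile is infinite).\<close>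
definition stringency :: "real \<Rightarrow> real \<Rightarrow> real \<Rightarrow> real \<Rightarrow> real" where
  "stringency p q \<theta> u = real_of_ereal (ereal \<theta> / F_H_inv p q (1 - u))"

definition Q_cell :: "point set \<Rightarrow> point \<Rightarrow> real \<Rightarrow> point set" where
  "Q_cell X x \<rho> = {y. (INF x'\<in>X - {x}. dist x' y) > \<rho> * dist x y}"

end

theory Submission
  imports Defs
begin


lemma gamma_int:
  fixes a k :: real assumes a: "a > 0" and k: "k > 0"
  shows "(\<integral>\<^sup>+b. ennreal (b powr (a-1) * exp (-(k*b))) * indicator {0..} b \<partial>lborel)
         = ennreal (Gamma a / k powr a)"
proof -
  have G: "(\<integral>\<^sup>+t. ennreal (t powr (a-1) / exp t) * indicator {0..} t \<partial>lborel) = ennreal (Gamma a)"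
    by (rule nn_integral_has_integral_lebesgue'[OF _ Gamma_integral_real[OF a]]) auto
  have "(\<integral>\<^sup>+t. ennreal (t powr (a-1) / exp t) * indicator {0..} t \<partial>lborel)
      = ennreal \<bar>k\<bar> * (\<integral>\<^sup>+b. ennreal ((0 + k*b) powr (a-1) / exp (0 + k*b)) * indicator {0..} (0 + k*b) \<partial>lborel)"
    using k by (intro nn_integral_real_affine) auto
  also have "\<dots> = ennreal k * (\<integral>\<^sup>+b. ennreal (k powr (a-1)) * (ennreal (b powr (a-1) * exp (-(k*b))) * indicator {0..} b) \<partial>lborel)"
  proof -
    have eq: "ennreal ((0 + k*b) powr (a-1) / exp (0 + k*b)) * indicator {0..} (0 + k*b)
      = ennreal (k powr (a-1)) * (ennreal (b powr (a-1) * exp (-(k*b))) * indicator {0..} b)" for b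
    proof (cases "b \<ge> 0")
      case True
      then have "(k*b) powr (a-1) / exp (k*b) = k powr (a-1) * (b powr (a-1) * exp (-(k*b)))"
        using k by (simp add: powr_mult exp_minus divide_inverse)
      then show ?thesis using True k
        by (simp add: ennreal_mult'[symmetric] indicator_def)
    next
      case False
      then show ?thesis using k by (simp add: indicator_def zero_le_mult_iff)
    qed
    show ?thesis using k by (simp only: eq) simp
  qed
  also have "\<dots> = ennreal (k powr a) * (\<integral>\<^sup>+b. ennreal (b powr (a-1) * exp (-(k*b))) * indicator {0..} b \<partial>lborel)"
    using k by (subst nn_integral_cmult) (auto simp: ennreal_mult'[symmetric] mult.assoc[symmetric] powr_mult_base)
  finally have E: "ennreal (k powr a) * (\<integral>\<^sup>+b. ennreal (b powr (a-1) * exp (-(k*b))) * indicator {0..} b \<partial>lborel) = ennreal (Gamma a)"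
    using G by simp
  have "(\<integral>\<^sup>+b. ennreal (b powr (a-1) * exp (-(k*b))) * indicator {0..} b \<partial>lborel)
     = ennreal (1 / k powr a) * (ennreal (k powr a) * (\<integral>\<^sup>+b. ennreal (b powr (a-1) * exp (-(k*b))) * indicator {0..} b \<partial>lborel))"
    using k by (simp add: mult.assoc[symmetric] ennreal_mult'[symmetric])
  also have "\<dots> = ennreal (Gamma a / k powr a)"
    using E k a by (simp add: ennreal_mult'[symmetric] Gamma_real_pos less_imp_le)
  finally show ?thesis .
qed


lemma gamma_density_measurable[measurable]:
  "gamma_density k \<in> borel_measurable borel"
  unfolding gamma_density_def by measurable

lemma gamma_density_nonneg: "k > 0 \<Longrightarrow> gamma_density k t \<ge> 0"
  unfolding gamma_density_def by (auto intro!: divide_nonneg_pos Gamma_real_pos)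

lemma gamma_density_alt:
  assumes k: "k > 0"
  shows "ennreal (gamma_density k t) = ennreal (k powr k / Gamma k) * (ennreal (t powr (k-1) * exp (-(k*t))) * indicator {0..} t)"
proof (cases "t > 0")
  case True
  have "gamma_density k t = k powr k / Gamma k * (t powr (k-1) * exp (-(k*t)))"
    using True by (simp add: gamma_density_def)
  then have "ennreal (gamma_density k t) = ennreal (k powr k / Gamma k * (t powr (k-1) * exp (-(k*t))))"
    by simp
  also have "\<dots> = ennreal (k powr k / Gamma k) * ennreal (t powr (k-1) * exp (-(k*t)))"
    using k by (intro ennreal_mult') (simp add: Gamma_real_pos less_imp_le)
  finally show ?thesis using True by (simp add: indicator_def)
next
  case False
  then show ?thesis by (cases "t = 0") (auto simp: gamma_density_def indicator_def)
qed

lemma gamma_prob: assumes k: "k > 0" shows "prob_space (gamma_measure k)"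
proof (rule prob_spaceI)
  have "emeasure (gamma_measure k) (space (gamma_measure k)) = (\<integral>\<^sup>+t. ennreal (gamma_density k t) \<partial>lborel)"
    unfolding gamma_measure_def by (simp add: emeasure_density)
  also have "\<dots> = (\<integral>\<^sup>+t. ennreal (k powr k / Gamma k) * (ennreal (t powr (k-1) * exp (-(k*t))) * indicator {0..} t) \<partial>lborel)"
    using k by (intro nn_integral_cong) (rule gamma_density_alt)
  also have "\<dots> = ennreal (k powr k / Gamma k) * ennreal (Gamma k / k powr k)"
  proof -
    have M: "(\<lambda>t. ennreal (t powr (k-1) * exp (-(k*t))) * indicator {0..} t) \<in> borel_measurable lborel"
      by measurable
    show ?thesis by (subst nn_integral_cmult[OF M]) (simp add: gamma_int[OF k k])
  qed
  also have "\<dots> = ennreal (k powr k / Gamma k * (Gamma k / k powr k))"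
    using k by (intro ennreal_mult'[symmetric]) (simp add: Gamma_real_pos less_imp_le)
  also have "\<dots> = 1"
  proof -
    have "k powr k / Gamma k * (Gamma k / k powr k) = 1"
      using Gamma_real_pos[of k] k by (simp add: field_simps less_imp_neq[symmetric])
    then show ?thesis by simp
  qed
  finally show "emeasure (gamma_measure k) (space (gamma_measure k)) = 1" .
qed



definition fH :: "real \<Rightarrow> real \<Rightarrow> real \<Rightarrow> real" where
  "fH p q w = (if w > 0 then p powr p * q powr q / (Gamma p * Gamma q) * Gamma (p+q) * w powr (p-1) / (q + p*w) powr (p+q) else 0)"

lemma fH_measurable[measurable]: "fH p q \<in> borel_measurable borel"
  unfolding fH_def by measurable

lemma inner_scale:
  assumes p: "p > 0" and b: "b > 0"
  shows "(\<integral>\<^sup>+a. ennreal (gamma_density p a) * indicator {..c*b} a \<partial>lborel)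
       = (\<integral>\<^sup>+w. ennreal (b * gamma_density p (b*w)) * indicator {..c} w \<partial>lborel)"
proof -
  have "(\<integral>\<^sup>+a. ennreal (gamma_density p a) * indicator {..c*b} a \<partial>lborel)
      = ennreal \<bar>b\<bar> * (\<integral>\<^sup>+w. ennreal (gamma_density p (0 + b*w)) * indicator {..c*b} (0 + b*w) \<partial>lborel)"
    using b by (intro nn_integral_real_affine) auto
  also have "\<dots> = ennreal b * (\<integral>\<^sup>+w. ennreal (gamma_density p (b*w)) * indicator {..c} w \<partial>lborel)"
    using b by (simp add: indicator_def mult.commute[of c])
  also have "\<dots> = (\<integral>\<^sup>+w. ennreal b * (ennreal (gamma_density p (b*w)) * indicator {..c} w) \<partial>lborel)"
    by (rule nn_integral_cmult[symmetric]) measurable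
  also have "\<dots> = (\<integral>\<^sup>+w. ennreal (b * gamma_density p (b*w)) * indicator {..c} w \<partial>lborel)"
    using b p by (intro nn_integral_cong) (simp add: ennreal_mult' mult.assoc)
  finally show ?thesis .
qed

lemma key_pointwise:
  assumes p: "p > 0" and q: "q > 0" and b: "b > 0" and w: "w > 0"
  shows "gamma_density q b * b * gamma_density p (b*w)
       = (p powr p * q powr q / (Gamma p * Gamma q) * w powr (p-1)) * (b powr ((p+q)-1) * exp (-((q+p*w)*b)))"
proof -
  have e: "exp (- (q*b)) * exp (- (p*(b*w))) = exp (-((q+p*w)*b))"
    by (simp add: exp_add[symmetric] algebra_simps)
  have "b powr (q-1) * b * b powr (p-1) = b powr (q-1) * b powr 1 * b powr (p-1)"
    by (simp only: powr_one[OF less_imp_le[OF b]])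
  also have "\<dots> = b powr ((q-1)+1+(p-1))" by (simp only: powr_add)
  finally have pw: "b powr ((p+q)-1) = b powr (q-1) * b * b powr (p-1)" by (simp add: algebra_simps)
  show ?thesis using b w
    by (simp add: gamma_density_def powr_mult pw e[symmetric] field_simps exp_add[symmetric])
qed

lemma inner_b:
  assumes p: "p > 0" and q: "q > 0"
  shows "(\<integral>\<^sup>+b. ennreal (gamma_density q b * b * gamma_density p (b*w)) \<partial>lborel) = ennreal (fH p q w)"
proof (cases "w > 0")
  case False
  have "gamma_density q b * b * gamma_density p (b*w) = 0" for b
    using False by (cases "b > 0") (auto simp: gamma_density_def zero_less_mult_iff)
  then have "(\<lambda>b. ennreal (gamma_density q b * b * gamma_density p (b*w))) = (\<lambda>b. 0)"
    by (intro ext) (simp only: ennreal_0)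
  then show ?thesis using False by (simp add: fH_def)
next
  case w: True
  define K where "K = p powr p * q powr q / (Gamma p * Gamma q) * w powr (p-1)"
  have K0: "K \<ge> 0" unfolding K_def using p q by (simp add: Gamma_real_pos less_imp_le)
  have qpw: "q + p*w > 0" using p q w by (simp add: add_pos_pos)
  have pt: "ennreal (gamma_density q b * b * gamma_density p (b*w))
      = ennreal K * (ennreal (b powr ((p+q)-1) * exp (-((q+p*w)*b))) * indicator {0..} b)" for b
  proof (cases "b > 0")
    case True
    have "gamma_density q b * b * gamma_density p (b*w) = K * (b powr ((p+q)-1) * exp (-((q+p*w)*b)))"
      unfolding K_def by (rule key_pointwise[OF p q True w])
    then have "ennreal (gamma_density q b * b * gamma_density p (b*w)) = ennreal K * ennreal (b powr ((p+q)-1) * exp (-((q+p*w)*b)))"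
      using K0 by (simp only: ennreal_mult')
    then show ?thesis using True by (simp add: indicator_def)
  next
    case False
    then show ?thesis by (cases "b = 0") (auto simp: gamma_density_def indicator_def)
  qed
  have M: "(\<lambda>b. ennreal (b powr ((p+q)-1) * exp (-((q+p*w)*b))) * indicator {0..} b) \<in> borel_measurable lborel"
    by measurable
  have "(\<integral>\<^sup>+b. ennreal (gamma_density q b * b * gamma_density p (b*w)) \<partial>lborel)
     = ennreal K * ennreal (Gamma (p+q) / (q+p*w) powr (p+q))"
    by (simp only: pt nn_integral_cmult[OF M] gamma_int[OF add_pos_pos[OF p q] qpw])
  also have "\<dots> = ennreal (K * (Gamma (p+q) / (q+p*w) powr (p+q)))"
    using K0 by (rule ennreal_mult'[symmetric])
  also have "K * (Gamma (p+q) / (q+p*w) powr (p+q)) = fH p q w"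
    using w by (simp add: fH_def K_def field_simps)
  finally show ?thesis .
qed

lemma P_int:
  assumes p: "p > 0" and q: "q > 0"
  shows "(\<integral>\<^sup>+b. ennreal (gamma_density q b) * (\<integral>\<^sup>+a. ennreal (gamma_density p a) * indicator {..c*b} a \<partial>lborel) \<partial>lborel)
       = (\<integral>\<^sup>+w. ennreal (fH p q w) * indicator {..c} w \<partial>lborel)"
proof -
  have s1: "ennreal (gamma_density q b) * (\<integral>\<^sup>+a. ennreal (gamma_density p a) * indicator {..c*b} a \<partial>lborel)
      = (\<integral>\<^sup>+w. ennreal (gamma_density q b * b * gamma_density p (b*w)) * indicator {..c} w \<partial>lborel)" for b
  proof (cases "b > 0")
    case True
    have "ennreal (gamma_density q b) * (\<integral>\<^sup>+a. ennreal (gamma_density p a) * indicator {..c*b} a \<partial>lborel)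
      = ennreal (gamma_density q b) * (\<integral>\<^sup>+w. ennreal (b * gamma_density p (b*w)) * indicator {..c} w \<partial>lborel)"
      by (simp only: inner_scale[OF p True])
    also have "\<dots> = (\<integral>\<^sup>+w. ennreal (gamma_density q b) * (ennreal (b * gamma_density p (b*w)) * indicator {..c} w) \<partial>lborel)"
      by (rule nn_integral_cmult[symmetric]) measurable
    also have "\<dots> = (\<integral>\<^sup>+w. ennreal (gamma_density q b * b * gamma_density p (b*w)) * indicator {..c} w \<partial>lborel)"
      using True q by (intro nn_integral_cong) (simp add: ennreal_mult' gamma_density_nonneg mult.assoc)
    finally show ?thesis .
  next
    case False
    then have "gamma_density q b = 0" by (simp add: gamma_density_def)
    then show ?thesis by simp
  qed
  have "(\<integral>\<^sup>+b. ennreal (gamma_density q b) * (\<integral>\<^sup>+a. ennreal (gamma_density p a) * indicator {..c*b} a \<partial>lborel) \<partial>lborel)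
      = (\<integral>\<^sup>+b. \<integral>\<^sup>+w. ennreal (gamma_density q b * b * gamma_density p (b*w)) * indicator {..c} w \<partial>lborel \<partial>lborel)"
    by (simp only: s1)
  also have "\<dots> = (\<integral>\<^sup>+w. \<integral>\<^sup>+b. ennreal (gamma_density q b * b * gamma_density p (b*w)) * indicator {..c} w \<partial>lborel \<partial>lborel)"
    by (rule lborel_pair.Fubini') measurable
  also have "\<dots> = (\<integral>\<^sup>+w. ennreal (fH p q w) * indicator {..c} w \<partial>lborel)"
  proof (rule nn_integral_cong)
    fix w :: real
    have "(\<integral>\<^sup>+b. ennreal (gamma_density q b * b * gamma_density p (b*w)) * indicator {..c} w \<partial>lborel)
       = (\<integral>\<^sup>+b. ennreal (gamma_density q b * b * gamma_density p (b*w)) \<partial>lborel) * indicator {..c} w"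
      by (rule nn_integral_multc) measurable
    then show "(\<integral>\<^sup>+b. ennreal (gamma_density q b * b * gamma_density p (b*w)) * indicator {..c} w \<partial>lborel)
       = ennreal (fH p q w) * indicator {..c} w"
      by (simp only: inner_b[OF p q])
  qed
  finally show ?thesis .
qed

lemma sub_alg:
  assumes p: "p > 0" and q: "q > 0" and x: "0 < x" "x < 1"
  shows "fH p q (q*x/(p*(1-x))) * (q/(p*(1-x)^2)) = x powr (p-1) * (1-x) powr (q-1) / Beta p q"
proof -
  define u where "u = 1 - x"
  have u: "u > 0" using x by (simp add: u_def)
  have gpos: "q*x/(p*u) > 0" using p q x u by simp
  have e0: "q + p*(q*x/(p*u)) = q/u" using p u x by (simp add: u_def field_simps)
  have e1: "p powr p = p powr (p-1) * p"
    using p by (simp add: powr_diff)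
  have e2: "q powr (p+q) = q powr q * q powr (p-1) * q"
    using q by (simp add: powr_add powr_diff)
  have e3: "u powr (p+q) = u powr (q-1) * u powr (p-1) * u^2"
  proof -
    have "u powr (q-1) * u powr (p-1) * u^2 = u powr (q-1) * u powr (p-1) * u powr 2"
      using u by (simp add: powr_realpow)
    also have "\<dots> = u powr ((q-1)+(p-1)+2)" by (simp only: powr_add)
    finally show ?thesis by (simp add: algebra_simps)
  qed
  have e4: "(q*x/(p*u)) powr (p-1) = q powr (p-1) * x powr (p-1) / (p powr (p-1) * u powr (p-1))"
    using p q x u by (simp add: powr_divide powr_mult)
  have e5: "(q/u) powr (p+q) = q powr (p+q) / u powr (p+q)"
    using q u by (simp add: powr_divide)
  have GB: "Beta p q = Gamma p * Gamma q / Gamma (p+q)" by (simp add: Beta_def)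
  have G: "Gamma p > 0" "Gamma q > 0" "Gamma (p+q) > 0" using p q by (auto intro!: Gamma_real_pos)
  have "fH p q (q*x/(p*u)) = p powr p * q powr q / (Gamma p * Gamma q) * Gamma (p+q) *
         (q*x/(p*u)) powr (p-1) / (q + p*(q*x/(p*u))) powr (p+q)"
    using gpos by (simp add: fH_def)
  also have "\<dots> = p powr p * q powr q / (Gamma p * Gamma q) * Gamma (p+q) *
         (q powr (p-1) * x powr (p-1) / (p powr (p-1) * u powr (p-1))) / (q powr (p+q) / u powr (p+q))"
    by (simp only: e0 e4 e5)
  finally have F: "fH p q (q*x/(p*u)) = \<dots>" .
  show ?thesis
    unfolding u_def[symmetric] F GB e1 e2 e3 using p q u x G
    by (simp add: field_simps)
qed

lemma subst_beta:
  assumes p: "p > 0" and q: "q > 0" and c: "c > 0"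
  defines "\<sigma> \<equiv> p*c/(p*c+q)"
  shows "(\<integral>\<^sup>+w. ennreal (fH p q w) * indicator {..c} w \<partial>lborel)
       = (\<integral>\<^sup>+x. ennreal (x powr (p-1) * (1-x) powr (q-1) / Beta p q * indicator {0..\<sigma>} x) \<partial>lborel)"
proof -
  define g where "g = (\<lambda>x::real. q*x/(p*(1-x)))"
  define g' where "g' = (\<lambda>x::real. q/(p*(1-x)^2))"
  have pcq: "p*c+q > 0" using p q c by (simp add: add_pos_pos)
  have sig: "0 < \<sigma>" "\<sigma> < 1" using p q c pcq by (auto simp: \<sigma>_def field_simps)
  have g0: "g 0 = 0" by (simp add: g_def)
  have om: "1 - \<sigma> = q/(p*c+q)" using pcq by (simp add: \<sigma>_def field_simps)
  have gs: "g \<sigma> = c"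
  proof -
    have "g \<sigma> = q*(p*c/(p*c+q)) / (p*(q/(p*c+q)))" unfolding g_def om by (simp add: \<sigma>_def)
    also have "\<dots> = c"
    proof -
      have "p*(q*q) + c*(p*(p*q)) > 0" using p q c by (intro add_pos_pos mult_pos_pos) auto
      then have d: "p*(q*q) + c*(p*(p*q)) \<noteq> 0" by simp
      have "c * (p * (q * q)) + c * (c * (p * (p * q))) = c * (p*(q*q) + c*(p*(p*q)))" by (simp add: algebra_simps)
      then show ?thesis using p q pcq d by (simp add: field_simps)
    qed
    finally show ?thesis .
  qed
  have deriv: "(g has_real_derivative g' x) (at x)" if "x \<in> {0..\<sigma>}" for x
  proof -
    have x1: "x < 1" using that sig by auto
    have nz: "1 - x \<noteq> 0" using x1 by simp
    show ?thesis unfolding g_def g'_def using x1 p nz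
      by (auto intro!: derivative_eq_intros simp: divide_simps) (simp add: algebra_simps power2_eq_square)
  qed
  have cont: "continuous_on {0..\<sigma>} g'"
    unfolding g'_def using sig p by (auto intro!: continuous_intros)
  have nonneg: "g' x \<ge> 0" if "x \<in> {0..\<sigma>}" for x
    unfolding g'_def using p q by simp
  have Mf: "set_borel_measurable borel {g 0..g \<sigma>} (fH p q)"
    unfolding set_borel_measurable_def by measurable
  have "(\<integral>\<^sup>+w. ennreal (fH p q w) * indicator {..c} w \<partial>lborel)
      = (\<integral>\<^sup>+w. ennreal (fH p q w * indicator {g 0..g \<sigma>} w) \<partial>lborel)"
    by (intro nn_integral_cong) (auto simp: g0 gs indicator_def fH_def)
  also have "\<dots> = (\<integral>\<^sup>+x. ennreal (fH p q (g x) * g' x * indicator {0..\<sigma>} x) \<partial>lborel)"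
    by (rule nn_integral_substitution[OF Mf deriv cont nonneg]) (use sig in auto)
  also have "\<dots> = (\<integral>\<^sup>+x. ennreal (x powr (p-1) * (1-x) powr (q-1) / Beta p q * indicator {0..\<sigma>} x) \<partial>lborel)"
  proof (intro nn_integral_cong)
    fix x :: real
    show "ennreal (fH p q (g x) * g' x * indicator {0..\<sigma>} x) = ennreal (x powr (p-1) * (1-x) powr (q-1) / Beta p q * indicator {0..\<sigma>} x)"
    proof (cases "x \<in> {0<..\<sigma>}")
      case True
      then have "fH p q (g x) * g' x = x powr (p-1) * (1-x) powr (q-1) / Beta p q"
        unfolding g_def g'_def using sub_alg[OF p q] sig by auto
      then show ?thesis by (simp add: indicator_def)
    next
      case False
      then show ?thesis by (cases "x = 0") (auto simp: indicator_def g0 fH_def)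
    qed
  qed
  finally show ?thesis .
qed

definition bet :: "real \<Rightarrow> real \<Rightarrow> real \<Rightarrow> real" where
  "bet p q x = x powr (p-1) * (1-x) powr (q-1)"

lemma bet_nonneg: "bet p q x \<ge> 0" by (simp add: bet_def)

lemma bet_measurable[measurable]: "bet p q \<in> borel_measurable borel"
  unfolding bet_def by measurable

lemma bet_int01: "p > 0 \<Longrightarrow> q > 0 \<Longrightarrow> bet p q integrable_on {0..1}"
  using has_integral_Beta_real[of p q] unfolding bet_def by blast

lemma bet_int: "p > 0 \<Longrightarrow> q > 0 \<Longrightarrow> 0 \<le> a \<Longrightarrow> b \<le> 1 \<Longrightarrow> bet p q integrable_on {a..b}"
  by (rule integrable_on_subinterval[OF bet_int01]) auto

lemma beta_nn:
  assumes p: "p > 0" and q: "q > 0" and s: "0 \<le> \<sigma>" "\<sigma> \<le> 1"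
  shows "(\<integral>\<^sup>+x. ennreal (x powr (p-1) * (1-x) powr (q-1) / Beta p q * indicator {0..\<sigma>} x) \<partial>lborel)
       = ennreal (integral {0..\<sigma>} (bet p q) / Beta p q)"
proof -
  have "(bet p q has_integral integral {0..\<sigma>} (bet p q)) {0..\<sigma>}"
    using bet_int[OF p q, of 0 \<sigma>] s by (simp add: integrable_integral)
  then have "((\<lambda>x. bet p q x / Beta p q) has_integral integral {0..\<sigma>} (bet p q) / Beta p q) {0..\<sigma>}"
    by (rule has_integral_divide)
  then have "(\<integral>\<^sup>+x. ennreal (bet p q x / Beta p q) * indicator {0..\<sigma>} x \<partial>lborel) = ennreal (integral {0..\<sigma>} (bet p q) / Beta p q)"
    using p q by (intro nn_integral_has_integral_lebesgue') (auto simp: bet_nonneg Beta_def Gamma_real_pos less_imp_le)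
  moreover have "(\<integral>\<^sup>+x. ennreal (x powr (p-1) * (1-x) powr (q-1) / Beta p q * indicator {0..\<sigma>} x) \<partial>lborel)
      = (\<integral>\<^sup>+x. ennreal (bet p q x / Beta p q) * indicator {0..\<sigma>} x \<partial>lborel)"
    by (intro nn_integral_cong) (simp add: indicator_def bet_def)
  ultimately show ?thesis by simp
qed

lemma beta_cdf_eq:
  assumes p: "p > 0" and q: "q > 0" and s: "0 < \<sigma>" "\<sigma> < 1"
  shows "beta_cdf p q \<sigma> = integral {0..\<sigma>} (bet p q) / Beta p q"
proof -
  have I: "(bet p q has_integral integral {0..\<sigma>} (bet p q)) {0..\<sigma>}"
    using bet_int[OF p q, of 0 \<sigma>] s by (simp add: integrable_integral)
  have nn: "(\<integral>\<^sup>+x. ennreal (indicator {0..\<sigma>} x * bet p q x) \<partial>lborel) = ennreal (integral {0..\<sigma>} (bet p q))"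
    using nn_integral_has_integral_lebesgue[OF _ I] by (simp add: bet_nonneg)
  have "set_integrable lborel {0..\<sigma>} (bet p q)"
    unfolding set_integrable_def
    by (rule integrableI_nonneg) (auto simp: nn bet_nonneg)
  then have "(LINT x : {0..\<sigma>} | lborel. bet p q x) = integral {0..\<sigma>} (bet p q)"
    by (rule set_borel_integral_eq_integral)
  moreover have "(LBINT x=0..\<sigma>. bet p q x) = (LINT x : {0..\<sigma>} | lborel. bet p q x)"
    using interval_integral_Icc[of 0 \<sigma> "bet p q"] s by (simp add: zero_ereal_def)
  ultimately show ?thesis using s unfolding beta_cdf_def by (simp add: bet_def)
qed

lemma G_cont: "p > 0 \<Longrightarrow> q > 0 \<Longrightarrow> continuous_on {0..1} (\<lambda>x. integral {0..x} (bet p q))"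
  by (rule indefinite_integral_continuous_1[OF bet_int01])

lemma G_mono:
  assumes p: "p > 0" and q: "q > 0" and "0 \<le> a" "a \<le> b" "b \<le> 1"
  shows "integral {0..a} (bet p q) \<le> integral {0..b} (bet p q)"
proof -
  have "integral {0..a} (bet p q) + integral {a..b} (bet p q) = integral {0..b} (bet p q)"
    using assms by (intro Henstock_Kurzweil_Integration.integral_combine bet_int) auto
  moreover have "0 \<le> integral {a..b} (bet p q)"
    using assms by (intro integral_nonneg bet_int) (auto simp: bet_nonneg)
  ultimately show ?thesis by linarith
qed

lemma sig_props:
  fixes p q c :: real
  assumes p: "p > 0" and q: "q > 0" and c: "c > 0"
  shows "0 < p*c/(p*c+q)" "p*c/(p*c+q) < 1"
proof -
  have pcq: "p*c+q > 0" using p q c by (simp add: add_pos_pos)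
  show "0 < p*c/(p*c+q)" using pcq p c by simp
  show "p*c/(p*c+q) < 1" using pcq q by (simp add: divide_less_eq)
qed

lemma F_H_pos_eq:
  assumes p: "p > 0" and q: "q > 0" and c: "c > 0"
  shows "F_H p q c = integral {0..p*c/(p*c+q)} (bet p q) / Beta p q"
  using c sig_props[OF p q c] by (simp add: F_H_def beta_cdf_eq[OF p q])

lemma Beta_pos: "(p::real) > 0 \<Longrightarrow> q > 0 \<Longrightarrow> Beta p q > 0"
  using Gamma_real_pos[of p] Gamma_real_pos[of q] Gamma_real_pos[of "p+q"] by (simp add: Beta_def)

lemma F_H_nonneg:
  assumes p: "p > 0" and q: "q > 0"
  shows "F_H p q c \<ge> 0"
proof (cases "c > 0")
  case True
  have "integral {0..p*c/(p*c+q)} (bet p q) \<ge> 0"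
    using sig_props[OF p q True] by (intro integral_nonneg bet_int[OF p q]) (auto simp: bet_nonneg)
  then show ?thesis using F_H_pos_eq[OF p q True] Beta_pos[OF p q] by simp
qed (simp add: F_H_def)

lemma FH_repr:
  assumes p: "p > 0" and q: "q > 0" and c: "c > 0"
  shows "(\<integral>\<^sup>+b. ennreal (gamma_density q b) * (\<integral>\<^sup>+a. ennreal (gamma_density p a) * indicator {..c*b} a \<partial>lborel) \<partial>lborel)
       = ennreal (F_H p q c)"
  using sig_props[OF p q c]
  by (simp only: P_int[OF p q] subst_beta[OF p q c] beta_nn[OF p q] F_H_pos_eq[OF p q c] less_imp_le)

lemma F_H_mono:
  assumes p: "p > 0" and q: "q > 0" and x: "0 < x" "x \<le> y"
  shows "F_H p q x \<le> F_H p q y"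
proof -
  have y: "y > 0" using x by simp
  have "p*x/(p*x+q) \<le> p*y/(p*y+q)"
    using p q x y by (simp add: field_simps add_pos_pos mult_left_mono)
  then have "integral {0..p*x/(p*x+q)} (bet p q) \<le> integral {0..p*y/(p*y+q)} (bet p q)"
    using sig_props[OF p q x(1)] sig_props[OF p q y] by (intro G_mono[OF p q]) auto
  then show ?thesis
    using F_H_pos_eq[OF p q x(1)] F_H_pos_eq[OF p q y] Beta_pos[OF p q] by (simp add: divide_right_mono)
qed

lemma F_H_cont:
  assumes p: "p > 0" and q: "q > 0" and c: "c > 0"
  shows "isCont (F_H p q) c"
proof -
  let ?H = "\<lambda>t. integral {0..p*t/(p*t+q)} (bet p q) / Beta p q"
  have nz: "p*t+q \<noteq> 0" if "t \<in> {0<..}" for t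
    using p q that by (simp add: add_pos_pos less_imp_neq[symmetric])
  have "continuous_on {0<..} (\<lambda>t. p*t/(p*t+q))"
    using nz by (intro continuous_intros) auto
  moreover have "(\<lambda>t. p*t/(p*t+q)) ` {0<..} \<subseteq> {0..1}"
  proof (rule image_subsetI)
    fix t :: real assume "t \<in> {0<..}"
    then have "0 < p*t/(p*t+q)" "p*t/(p*t+q) < 1" using sig_props[OF p q] by auto
    then show "p*t/(p*t+q) \<in> {0..1}" by simp
  qed
  ultimately have "continuous_on {0<..} (\<lambda>t. integral {0..p*t/(p*t+q)} (bet p q))"
    by (rule continuous_on_compose2[OF G_cont[OF p q]])
  then have "continuous_on {0<..} ?H" using Beta_pos[OF p q] by (intro continuous_intros) auto
  then have "isCont ?H c" using c by (intro continuous_on_interior[where S="{0<..}"]) (auto simp: interior_open)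
  moreover have "\<forall>\<^sub>F t in nhds c. F_H p q t = ?H t"
    using eventually_nhds_in_open[of "{0<..}" c] c
    by (auto elim!: eventually_mono simp: F_H_pos_eq[OF p q])
  ultimately show ?thesis using isCont_cong[of "F_H p q" ?H c] by simp
qed

lemma quantile_gt:
  assumes p: "p > 0" and q: "q > 0" and c: "c > 0" and u: "u < 1" and F: "F_H p q c < 1 - u"
  shows "ereal c < F_H_inv p q (1 - u)"
proof -
  have "\<exists>d>0. \<forall>x'. dist x' c < d \<longrightarrow> dist (F_H p q x') (F_H p q c) < (1 - u) - F_H p q c"
    using F_H_cont[OF p q c] F unfolding continuous_at_eps_delta by auto
  then obtain d where d: "d > 0" and dd: "\<And>x'. dist x' c < d \<Longrightarrow> dist (F_H p q x') (F_H p q c) < (1 - u) - F_H p q c"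
    by blast
  have "dist (c + d/2) c < d" using d by (simp add: dist_real_def)
  from dd[OF this] have Fd: "F_H p q (c + d/2) < 1 - u" by (simp add: dist_real_def abs_less_iff)
  have "ereal (c + d/2) \<le> F_H_inv p q (1 - u)"
    unfolding F_H_inv_def
  proof (rule Inf_greatest, clarify)
    fix x assume x: "1 - u \<le> F_H p q x"
    show "ereal (c + d/2) \<le> ereal x"
    proof (rule ccontr)
      assume "\<not> ereal (c + d/2) \<le> ereal x"
      then have xl: "x < c + d/2" by simp
      show False
      proof (cases "x > 0")
        case True
        then have "F_H p q x \<le> F_H p q (c + d/2)" using xl by (intro F_H_mono[OF p q]) auto
        then show False using x Fd by simp
      next
        case False
        then show False using x u by (simp add: F_H_def)
      qed
    qed
  qed
  moreover have "ereal c < ereal (c + d/2)" using d by simp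
  ultimately show ?thesis by (meson less_le_trans)
qed



lemma space_gamma[simp]: "space (gamma_measure k) = UNIV"
  by (simp add: gamma_measure_def)

lemma sets_gamma[simp]: "sets (gamma_measure k) = sets borel"
  by (simp add: gamma_measure_def)

lemma test1:
  fixes X :: "'i set" and x0 x1 :: 'i
  assumes p: "p > 0" and q: "q > 0" 
  defines "M \<equiv> (\<lambda>z. if z = x0 then gamma_measure p else gamma_measure q)"
  shows "product_prob_space M"
proof -
  have PS: "prob_space (M i)" for i unfolding M_def using gamma_prob[OF p] gamma_prob[OF q] by simp
  show ?thesis
    unfolding product_prob_space_def product_prob_space_axioms_def product_sigma_finite_def
    using PS prob_space_imp_sigma_finite by blast
qed
lemma prob_repr:
  fixes X :: "'i set" and x0 x1 :: 'i
  assumes p: "p > 0" and q: "q > 0" and c: "c > 0"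
    and X: "x0 \<in> X" "x1 \<in> X" "x0 \<noteq> x1"
  defines "M \<equiv> (\<lambda>z. if z = x0 then gamma_measure p else gamma_measure q)"
  shows "emeasure (Pi\<^sub>M X M) {h \<in> space (Pi\<^sub>M X M). h x0 \<le> c * h x1} = ennreal (F_H p q c)"
proof -
  interpret product_prob_space M X unfolding M_def by (rule test1[OF p q])
  have sM[simp]: "sets (M i) = sets borel" for i unfolding M_def by simp
  have spM[simp]: "space (M i) = UNIV" for i unfolding M_def by simp
  have M0: "M x0 = gamma_measure p" and M1: "M x1 = gamma_measure q" using X by (auto simp: M_def)
  define J where "J = {x0, x1}"
  define T where "T = {\<omega> \<in> space (Pi\<^sub>M J M). \<omega> x0 \<le> c * \<omega> x1}"
  have T: "T \<in> sets (Pi\<^sub>M J M)"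
  proof -
    have a: "(\<lambda>\<omega>. \<omega> x0) \<in> Pi\<^sub>M J M \<rightarrow>\<^sub>M borel"
      using measurable_component_singleton[of x0 J M] measurable_cong_sets[OF refl sM[of x0], of "Pi\<^sub>M J M"] unfolding J_def by auto
    have b: "(\<lambda>\<omega>. \<omega> x1) \<in> Pi\<^sub>M J M \<rightarrow>\<^sub>M borel"
      using measurable_component_singleton[of x1 J M] measurable_cong_sets[OF refl sM[of x1], of "Pi\<^sub>M J M"] unfolding J_def by auto
    show ?thesis unfolding T_def using a b by measurable
  qed
  have S: "{h \<in> space (Pi\<^sub>M X M). h x0 \<le> c * h x1} = prod_emb X M J T"
    using X by (auto simp: prod_emb_def T_def J_def space_PiM PiE_def extensional_def)
  have "emeasure (Pi\<^sub>M X M) {h \<in> space (Pi\<^sub>M X M). h x0 \<le> c * h x1} = emeasure (Pi\<^sub>M J M) T"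
    unfolding S using X T by (intro emeasure_PiM_emb') (auto simp: J_def)
  also have "\<dots> = (\<integral>\<^sup>+\<omega>. indicator T \<omega> \<partial>Pi\<^sub>M J M)"
    using T by simp
  also have "\<dots> = (\<integral>\<^sup>+\<omega>. (if \<omega> x0 \<le> c * \<omega> x1 then 1 else 0) \<partial>Pi\<^sub>M {x0, x1} M)"
    unfolding J_def by (intro nn_integral_cong) (auto simp: T_def J_def indicator_def)
  also have "\<dots> = (\<integral>\<^sup>+z. (if fst z \<le> c * snd z then 1 else 0) \<partial>(M x0 \<Otimes>\<^sub>M M x1))"
    using X by (intro product_nn_integral_pair) (simp add: measurable_cong_sets[OF sets_pair_measure_cong[OF sM sM] refl], measurable)
  also have "\<dots> = (\<integral>\<^sup>+z. (if fst z \<le> c * snd z then 1 else 0) \<partial>(gamma_measure p \<Otimes>\<^sub>M gamma_measure q))"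
    by (simp add: M0 M1)
  also have "\<dots> = (\<integral>\<^sup>+b. (\<integral>\<^sup>+a. (if a \<le> c * b then 1 else 0) \<partial>gamma_measure p) \<partial>gamma_measure q)"
  proof -
    interpret pair_sigma_finite "gamma_measure p" "gamma_measure q"
      using gamma_prob[OF p] gamma_prob[OF q]
      by (intro pair_sigma_finite.intro prob_space_imp_sigma_finite)
    show ?thesis
      by (subst nn_integral_snd[symmetric])
         (simp_all add: measurable_cong_sets[OF sets_pair_measure_cong[OF sets_gamma sets_gamma] refl], measurable)
  qed
  also have "\<dots> = (\<integral>\<^sup>+b. ennreal (gamma_density q b) * (\<integral>\<^sup>+a. ennreal (gamma_density p a) * indicator {..c*b} a \<partial>lborel) \<partial>lborel)"
  proof -
    have "(\<integral>\<^sup>+b. (\<integral>\<^sup>+a. (if a \<le> c * b then 1 else 0) \<partial>gamma_measure p) \<partial>gamma_measure q)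
      = (\<integral>\<^sup>+b. (\<integral>\<^sup>+a. ennreal (gamma_density p a) * (if a \<le> c * b then 1 else 0) \<partial>lborel) \<partial>gamma_measure q)"
      by (intro nn_integral_cong) (simp add: gamma_measure_def nn_integral_density)
    also have "\<dots> = (\<integral>\<^sup>+b. ennreal (gamma_density q b) * (\<integral>\<^sup>+a. ennreal (gamma_density p a) * (if a \<le> c * b then 1 else 0) \<partial>lborel) \<partial>lborel)"
      unfolding gamma_measure_def by (subst nn_integral_density) auto
    also have "\<dots> = (\<integral>\<^sup>+b. ennreal (gamma_density q b) * (\<integral>\<^sup>+a. ennreal (gamma_density p a) * indicator {..c*b} a \<partial>lborel) \<partial>lborel)"
      by (simp add: indicator_def of_bool_def)
    finally show ?thesis .
  qed
  also have "\<dots> = ennreal (F_H p q c)" by (rule FH_repr[OF p q c])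
  finally show ?thesis .
qed


lemma nearest_other:
  assumes LF: "locally_finite_set X" and NE: "X - {x} \<noteq> {}"
  shows "\<exists>x1\<in>X - {x}. \<forall>z\<in>X - {x}. dist x1 y \<le> dist z y"
proof -
  obtain z0 where z0: "z0 \<in> X - {x}" using NE by blast
  define S where "S = (X - {x}) \<inter> cball y (dist z0 y)"
  have "S \<subseteq> X \<inter> cball 0 (dist z0 y + norm y)"
  proof -
    have "cball y (dist z0 y) \<subseteq> cball 0 (dist z0 y + norm y)"
      by (subst cball_subset_cball_iff) (auto simp: dist_norm)
    then show ?thesis unfolding S_def by auto
  qed
  then have fin: "finite S" using LF unfolding locally_finite_set_def by (meson finite_subset)
  have z0S: "z0 \<in> S" using z0 by (simp add: S_def dist_commute)
  define m where "m = Min ((\<lambda>z. dist z y) ` S)"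
  have "m \<in> (\<lambda>z. dist z y) ` S" unfolding m_def using fin z0S by (intro Min_in) auto
  then obtain x1 where x1: "x1 \<in> S" "dist x1 y = m" by auto
  have le: "m \<le> dist z y" if "z \<in> S" for z unfolding m_def using fin that by (intro Min_le) auto
  show ?thesis
  proof (intro bexI ballI)
    show "x1 \<in> X - {x}" using x1 by (simp add: S_def)
    fix z assume z: "z \<in> X - {x}"
    show "dist x1 y \<le> dist z y"
    proof (cases "z \<in> S")
      case True then show ?thesis using le x1 by simp
    next
      case False
      then have "dist z y > dist z0 y" using z by (auto simp: S_def dist_commute)
      moreover have "dist x1 y \<le> dist z0 y" using le[OF z0S] x1 by simp
      ultimately show ?thesis by simp
    qed
  qed
qed

lemma SIR_le:
  fixes X :: "point set"
  assumes x1: "x1 \<in> X - {x}" and d: "dist x y > 0" and d1: "dist x1 y > 0"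
    and \<alpha>: "\<alpha> > 0" and \<theta>: "\<theta> > 0"
    and le: "h x \<le> \<theta> * (dist x y / dist x1 y) powr \<alpha> * h x1"
  shows "SIR \<alpha> X x y h \<le> ennreal \<theta>"
proof -
  define D1 where "D1 = dist x1 y"
  define D where "D = dist x y"
  define \<Sigma> where "\<Sigma> = (\<Sum>\<^sub>\<infinity> x'\<in>X - {x}. ennreal (h x') * path_gain \<alpha> (dist x' y))"
  have SIR: "SIR \<alpha> X x y h = ennreal (h x) * ennreal (D powr (-\<alpha>)) / \<Sigma>"
    using d by (simp add: SIR_def path_gain_def \<Sigma>_def D_def)
  have "(\<Sum>\<^sub>\<infinity> x'\<in>{x1}. ennreal (h x') * path_gain \<alpha> (dist x' y)) \<le> \<Sigma>"
    unfolding \<Sigma>_def using x1 by (intro infsum_mono_neutral nonneg_summable_on_complete) auto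
  then have Sge: "ennreal (h x1) * ennreal (D1 powr (-\<alpha>)) \<le> \<Sigma>"
    using d1 by (simp add: path_gain_def D1_def)
  show ?thesis
  proof (cases "h x > 0")
    case False
    then have "ennreal (h x) = 0" by (simp add: ennreal_eq_0_iff)
    then show ?thesis using SIR by simp
  next
    case True
    have cpos: "\<theta> * (D / D1) powr \<alpha> > 0" using \<theta> d d1 by (simp add: D_def D1_def)
    have h1: "h x1 > 0"
    proof (rule ccontr)
      assume "\<not> h x1 > 0"
      then have "\<theta> * (D / D1) powr \<alpha> * h x1 \<le> 0" using cpos by (simp add: mult_nonneg_nonpos)
      then show False using le True by (simp add: D_def D1_def)
    qed
    have e: "(D / D1) powr \<alpha> * D powr (-\<alpha>) = D1 powr (-\<alpha>)"
      using d d1 by (simp add: powr_divide powr_minus D_def D1_def field_simps)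
    have "h x * D powr (-\<alpha>) \<le> (\<theta> * (D / D1) powr \<alpha> * h x1) * D powr (-\<alpha>)"
      using le by (intro mult_right_mono) (auto simp: D_def D1_def)
    also have "\<dots> = h x1 * D1 powr (-\<alpha>) * \<theta>" using e by (simp add: algebra_simps)
    finally have rl: "h x * D powr (-\<alpha>) \<le> h x1 * D1 powr (-\<alpha>) * \<theta>" .
    have "ennreal (h x) * ennreal (D powr (-\<alpha>)) = ennreal (h x * D powr (-\<alpha>))"
      using True by (simp add: ennreal_mult')
    also have "\<dots> \<le> ennreal (h x1 * D1 powr (-\<alpha>) * \<theta>)" using rl by (rule ennreal_leI)
    also have "\<dots> = (ennreal (h x1) * ennreal (D1 powr (-\<alpha>))) * ennreal \<theta>"
      using h1 \<theta> by (simp add: ennreal_mult' mult_nonneg_nonneg)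
    also have "\<dots> \<le> \<Sigma> * ennreal \<theta>" using Sge by (rule mult_right_mono) simp
    finally have N: "ennreal (h x) * ennreal (D powr (-\<alpha>)) \<le> \<Sigma> * ennreal \<theta>" .
    have "0 < ennreal (h x1) * ennreal (D1 powr (-\<alpha>))"
      using h1 d1 by (simp add: D1_def ennreal_mult'[symmetric] mult_pos_pos)
    then have "\<Sigma> > 0" using Sge by (rule less_le_trans)
    then show ?thesis unfolding SIR using N by (rule divide_le_posI_ennreal)
  qed
qed

lemma cell_main:
  fixes X :: "point set"
  assumes LF: "locally_finite_set X" and NE: "X - {x} \<noteq> {}"
    and p: "p > 0" and q: "q > 0" and \<alpha>: "\<alpha> > 0" and \<theta>: "\<theta> > 0" and u0: "0 \<le> u" and u1: "u < 1"
    and y: "y \<in> C p q \<alpha> X \<theta> u x"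
  shows "y \<in> Q_cell X x (stringency p q \<theta> u powr (1/\<alpha>))"
proof -
  from y have sv: "serves X x y" and cov: "coverage_prob p q \<alpha> X \<theta> x y > u"
    by (auto simp: covered_cell_def)
  then have xX: "x \<in> X" and near: "\<forall>x'\<in>X. dist x y \<le> dist x' y" by (auto simp: serves_def)
  obtain x1 where x1: "x1 \<in> X - {x}" and mn: "\<forall>z\<in>X-{x}. dist x1 y \<le> dist z y"
    using nearest_other[OF LF NE] by blast
  have INF: "(INF z\<in>X-{x}. dist z y) = dist x1 y" using x1 mn by (intro cInf_eq_minimum) auto
  define \<rho> where "\<rho> = stringency p q \<theta> u powr (1/\<alpha>)"
  have dd1: "dist x y \<le> dist x1 y" using near x1 by auto
  have goal: "\<rho> * dist x y < dist x1 y"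
  proof (cases "dist x y = 0")
    case True
    then have "x = y" by simp
    then have "dist x1 y > 0" using x1 by auto
    then show ?thesis using True by simp
  next
    case False
    define d where "d = dist x y"
    define d1 where "d1 = dist x1 y"
    have d: "d > 0" using False by (simp add: d_def)
    have d1: "d1 > 0" using d dd1 unfolding d_def d1_def by linarith
    define c where "c = \<theta> * (d/d1) powr \<alpha>"
    have cpos: "c > 0" using \<theta> d d1 by (simp add: c_def)
    define M where "M = (\<lambda>z. if z = x then gamma_measure p else gamma_measure q)"
    have fm: "fading_measure p q X x = Pi\<^sub>M X M" by (simp add: fading_measure_def M_def)
    have PS: "prob_space (Pi\<^sub>M X M)"
      by (rule prob_space_PiM) (simp add: M_def gamma_prob p q)
    interpret P: prob_space "Pi\<^sub>M X M" by (rule PS)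
    have sM: "sets (M i) = sets borel" for i unfolding M_def by simp
    define S where "S = {h \<in> space (Pi\<^sub>M X M). h x \<le> c * h x1}"
    have Sm: "S \<in> sets (Pi\<^sub>M X M)"
    proof -
      have a: "(\<lambda>\<omega>. \<omega> x) \<in> Pi\<^sub>M X M \<rightarrow>\<^sub>M borel"
        using measurable_component_singleton[of x X M] measurable_cong_sets[OF refl sM[of x], of "Pi\<^sub>M X M"] xX by auto
      have b: "(\<lambda>\<omega>. \<omega> x1) \<in> Pi\<^sub>M X M \<rightarrow>\<^sub>M borel"
        using measurable_component_singleton[of x1 X M] measurable_cong_sets[OF refl sM[of x1], of "Pi\<^sub>M X M"] x1 by auto
      show ?thesis unfolding S_def using a b by measurable
    qed
    have emS: "emeasure (Pi\<^sub>M X M) S = ennreal (F_H p q c)"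
      unfolding S_def M_def using x1 by (intro prob_repr[OF p q cpos xX]) auto
    have mS: "measure (Pi\<^sub>M X M) S = F_H p q c"
      using emS F_H_nonneg[OF p q, of c] by (simp add: measure_def)
    have sub: "{h \<in> space (Pi\<^sub>M X M). SIR \<alpha> X x y h > ennreal \<theta>} \<subseteq> space (Pi\<^sub>M X M) - S"
    proof (clarify)
      fix h assume h: "h \<in> space (Pi\<^sub>M X M)" and gt: "ennreal \<theta> < SIR \<alpha> X x y h" and hS: "h \<in> S"
      then have "h x \<le> \<theta> * (dist x y / dist x1 y) powr \<alpha> * h x1"
        by (simp add: S_def c_def d_def d1_def)
      then have "SIR \<alpha> X x y h \<le> ennreal \<theta>"
        using d d1 by (intro SIR_le[OF x1 _ _ \<alpha> \<theta>]) (auto simp: d_def d1_def)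
      then show False using gt by simp
    qed
    have "coverage_prob p q \<alpha> X \<theta> x y = measure (Pi\<^sub>M X M) {h \<in> space (Pi\<^sub>M X M). SIR \<alpha> X x y h > ennreal \<theta>}"
      by (simp add: coverage_prob_def fm)
    also have "\<dots> \<le> measure (Pi\<^sub>M X M) (space (Pi\<^sub>M X M) - S)"
      using sub Sm by (intro P.finite_measure_mono) auto
    also have "\<dots> = 1 - F_H p q c" using Sm mS by (simp add: P.prob_compl)
    finally have "F_H p q c < 1 - u" using cov by simp
    then have Q: "ereal c < F_H_inv p q (1 - u)" by (rule quantile_gt[OF p q cpos u1])
    have tc: "\<theta> / c = (d1/d) powr \<alpha>"
      using \<theta> d d1 by (simp add: c_def powr_divide field_simps)
    show ?thesis
    proof (cases "F_H_inv p q (1 - u)")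
      case (real r)
      then have cr: "c < r" using Q by simp
      then have r0: "r \<noteq> 0" using cpos by simp
      have st: "stringency p q \<theta> u = \<theta> / r" using real r0 by (simp add: stringency_def)
      have "\<theta> / r < \<theta> / c" using cr cpos \<theta> by (intro divide_strict_left_mono) auto
      then have lt: "\<theta> / r < (d1/d) powr \<alpha>" using tc by simp
      have "\<rho> = (\<theta> / r) powr (1/\<alpha>)" by (simp add: \<rho>_def st)
      also have "\<dots> < ((d1/d) powr \<alpha>) powr (1/\<alpha>)"
        using lt \<alpha> \<theta> cr cpos by (intro powr_less_mono2) auto
      also have "\<dots> = d1/d" using \<alpha> d d1 by (simp add: powr_powr)
      finally have "\<rho> < d1/d" .
      then show ?thesis using d by (simp add: d_def d1_def field_simps)
    next
      case PInf
      then have "\<rho> = 0" by (simp add: \<rho>_def stringency_def)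
      then show ?thesis using d1 by (simp add: d1_def)
    next
      case MInf
      then show ?thesis using Q by simp
    qed
  qed
  show ?thesis unfolding Q_cell_def using goal INF \<rho>_def by simp
qed


theorem theorem1:
  fixes X :: "point set" and p q \<alpha> \<theta> u :: real
  assumes "locally_finite_set X" and "card X \<ge> 2 \<or> infinite X"
    and "p > 0" and "q > 0" and "\<alpha> > 0" and "\<theta> > 0" and "0 \<le> u" and "u < 1"
  defines "\<rho> \<equiv> stringency p q \<theta> u powr (1 / \<alpha>)"
  shows "(\<forall>x\<in>X. C p q \<alpha> X \<theta> u x \<subseteq> Q_cell X x \<rho>)
     \<and> coverage_manifold p q \<alpha> X \<theta> u \<subseteq> (\<Union>x\<in>X. Q_cell X x \<rho>)"
proof -
  have NE: "X - {x} \<noteq> {}" if "x \<in> X" for x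
  proof
    assume "X - {x} = {}"
    then have "X \<subseteq> {x}" by auto
    then have "finite X" "card X \<le> 1" using card_mono[of "{x}" X] by (auto intro: finite_subset)
    then show False using assms(2) by simp
  qed
  have A: "\<forall>x\<in>X. C p q \<alpha> X \<theta> u x \<subseteq> Q_cell X x \<rho>"
    unfolding \<rho>_def using assms NE by (auto intro!: cell_main)
  moreover have "coverage_manifold p q \<alpha> X \<theta> u \<subseteq> (\<Union>x\<in>X. Q_cell X x \<rho>)"
    using A unfolding coverage_manifold_def by blast
  ultimately show ?thesis by blast
qed

end
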